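(* Let $k\in\{1,\dots,n\}$. Let $S_0=\emptyset$ and, for $t=1,\dots,k$, let $S_t=S_{t-1}\cup\{u_t\}$ where $u_t\in\arg\max_{u\in V\setminus S_{t-1}}\big(r(S_{t-1}\cup\{u\})-r(S_{t-1})\big)$ (ties broken arbitrarily). Then $$r(S_k)\;\ge\;\Big(1-\frac1e\Big)\max_{S\subseteq V,\;|S|=k} r(S).$$
   Context: Let $G=(V,E)$ be a finite tree with $|V|=n$, rooted at a node $s$ (the infection source). For a node $i$: $d_i$ is its depth (number of edges on the path from $s$ to $i$); $A_i$ is the set of ancestors of $i$ (strict, including its parent); $N_i$ is the set of descendants of $i$ (strict, not including $i$); $n_i=|N_i|$. Each edge $e$ carries an independent random variable $X_e\sim\mathrm{Exp}(\lambda)$ with $\lambda>0$, and $Z_i=\sum_{e \text{ on the path from } s \text{ to } i}X_e$ is the infection time of $i$ (so $Z_s=0$; $Z_i$ is a sum of $d_i$ i.i.d. $\mathrm{Exp}(\lambda)$ variables). The immunization time $\tau\ge 0$ is a single random variable, common to all vaccinated nodes and independent of $(X_e)_{e\in E}$. For $S\subseteq V$ (the vaccinated set), a node $i\in S$ becomes immune iff $Z_i>\tau$, and an immune node saves all its descendants. The expected total reward is defined as $r(S)=\mathbb{E}\big[\,\big|\bigcup_{i\in S:\,Z_i>\tau}N_i\big|\,\big]$, the expected number of nodes that are descendants of at least one immune vaccinated node. *)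

theory Defs
  imports "HOL-Probability.Probability"
begin

text \<open>A finite tree rooted at s, given by a parent map par (the edge of a non-root
node v is the edge (par v, v)). Every node of V reaches the root by following parents.\<close>
definition rooted_tree :: "'a set \<Rightarrow> 'a \<Rightarrow> ('a \<Rightarrow> 'a) \<Rightarrow> bool" where
  "rooted_tree V s par \<longleftrightarrow> finite V \<and> s \<in> V \<and> (\<forall>v\<in>V - {s}. par v \<in> V)
     \<and> (\<forall>v\<in>V. \<exists>m. (par ^^ m) v = s)"

definition depth :: "'a \<Rightarrow> ('a \<Rightarrow> 'a) \<Rightarrow> 'a \<Rightarrow> nat" where
  "depth s par i = (LEAST m. (par ^^ m) i = s)"

definition ancestors :: "'a \<Rightarrow> ('a \<Rightarrow> 'a) \<Rightarrow> 'a \<Rightarrow> 'a set" where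
  "ancestors s par i = {(par ^^ m) i | m. 1 \<le> m \<and> m \<le> depth s par i}"

definition descendants :: "'a set \<Rightarrow> 'a \<Rightarrow> ('a \<Rightarrow> 'a) \<Rightarrow> 'a \<Rightarrow> 'a set" where
  "descendants V s par i = {j \<in> V. i \<in> ancestors s par j}"

text \<open>infection time Z_i: sum of the edge variables on the path from s to i;
the edges on that path are indexed by the non-root nodes among i and its ancestors\<close>
definition infection_time :: "'a \<Rightarrow> ('a \<Rightarrow> 'a) \<Rightarrow> ('a \<Rightarrow> real) \<Rightarrow> 'a \<Rightarrow> real" where
  "infection_time s par X i = (\<Sum>j \<in> insert i (ancestors s par i) - {s}. X j)"

definition edge_space :: "'a set \<Rightarrow> 'a \<Rightarrow> real \<Rightarrow> ('a \<Rightarrow> real) measure" where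
  "edge_space V s lam = PiM (V - {s}) (\<lambda>_. density lborel (exponential_density lam))"

text \<open>expected total reward r(S); T is the distribution of the immunization time tau,
taken independent of the edge variables (product measure)\<close>
definition reward :: "'a set \<Rightarrow> 'a \<Rightarrow> ('a \<Rightarrow> 'a) \<Rightarrow> real \<Rightarrow> real measure \<Rightarrow> 'a set \<Rightarrow> real" where
  "reward V s par lam T S =
     (\<integral>\<omega>. real (card (\<Union>i \<in> {i \<in> S. snd \<omega> < infection_time s par (fst \<omega>) i}.
                              descendants V s par i))
      \<partial>(edge_space V s lam \<Otimes>\<^sub>M T))"

end

theory Submission imports Defs begin

lemma comp_meas[measurable]:
  "(\<lambda>x. x j) \<in> borel_measurable (PiM I (\<lambda>_. density lborel (exponential_density lam)))"
proof (cases "j \<in> I")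
  case True thus ?thesis by measurable
next
  case False
  have "(\<lambda>x. undefined::real) \<in> borel_measurable (PiM I (\<lambda>_. density lborel (exponential_density lam)))" by simp
  then show ?thesis
    by (rule measurable_cong[THEN iffD1, rotated]) (use False in \<open>auto simp: space_PiM PiE_def extensional_def\<close>)
qed

lemma card_as_sum:
  assumes "finite V" "A \<subseteq> V"
  shows "card A = (\<Sum>j\<in>V. if j \<in> A then 1 else (0::nat))"
proof -
  have "(\<Sum>j\<in>V. if j \<in> A then 1 else (0::nat)) = card {j\<in>V. j \<in> A}"
    using assms(1) by (simp add: sum.If_cases Int_def conj_commute)
  also have "{j\<in>V. j \<in> A} = A" using assms(2) by auto
  finally show ?thesis by simp
qed

lemma integrand_meas:
  assumes "finite V" "finite S" "sets T = sets borel"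
  shows "(\<lambda>\<omega>. real (card (\<Union>i \<in> {i \<in> S. snd \<omega> < infection_time s par (fst \<omega>) i}.
                              descendants V s par i))) \<in> borel_measurable (edge_space V s lam \<Otimes>\<^sub>M T)"
proof -
  have eq: "real (card (\<Union>i \<in> {i \<in> S. snd \<omega> < infection_time s par (fst \<omega>) i}.
                              descendants V s par i)) =
     (\<Sum>j\<in>V. if (\<exists>i\<in>S. snd \<omega> < infection_time s par (fst \<omega>) i \<and> j \<in> descendants V s par i) then 1 else 0)" for \<omega>
    by (subst card_as_sum[OF assms(1)]) (auto simp: descendants_def of_nat_sum intro!: sum.cong)
  have ms[measurable]: "snd \<in> measurable (edge_space V s lam \<Otimes>\<^sub>M T) borel"
    using assms(3) by (metis measurable_snd measurable_cong_sets sets_pair_measure_cong)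
  have mz[measurable]: "(\<lambda>\<omega>. infection_time s par (fst \<omega>) i) \<in> borel_measurable (edge_space V s lam \<Otimes>\<^sub>M T)" for i
    unfolding infection_time_def edge_space_def by measurable
  have "(\<lambda>\<omega>. (\<Sum>j\<in>V. if (\<exists>i\<in>S. snd \<omega> < infection_time s par (fst \<omega>) i \<and> j \<in> descendants V s par i) then 1 else 0::real))
     \<in> borel_measurable (edge_space V s lam \<Otimes>\<^sub>M T)"
    using assms by measurable
  then show ?thesis by (simp add: eq)
qed


lemma cov_mono:
  assumes "finite V" "\<And>i. D i \<subseteq> V" "S \<subseteq> S'"
  shows "card (\<Union>i\<in>{i\<in>S. P i}. D i) \<le> card (\<Union>i\<in>{i\<in>S'. P i}. D i)"
  by (rule card_mono) (use assms in \<open>auto intro: finite_subset\<close>)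

lemma cov_submod:
  assumes "finite V" "\<And>i. D i \<subseteq> V" "finite A"
  shows "real (card (\<Union>i\<in>{i\<in>G \<union> A. P i}. D i)) \<le> real (card (\<Union>i\<in>{i\<in>G. P i}. D i))
     + (\<Sum>v\<in>A. real (card (\<Union>i\<in>{i\<in>insert v G. P i}. D i)) - real (card (\<Union>i\<in>{i\<in>G. P i}. D i)))"
proof -
  define X where "X = (\<Union>i\<in>{i\<in>G. P i}. D i)"
  define Y where "Y v = (if P v then D v else {})" for v
  have fin: "finite B" if "B \<subseteq> V" for B using assms(1) that finite_subset by blast
  have XV: "X \<subseteq> V" and YV: "Y v \<subseteq> V" for v using assms(2) by (auto simp: X_def Y_def)
  have cu: "card (X \<union> W) = card X + card (W - X)" if "W \<subseteq> V" for W
  proof -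
    have "X \<union> W = X \<union> (W - X)" by auto
    then show ?thesis using card_Un_disjoint[of X "W - X"] fin XV that by auto
  qed
  have e1: "(\<Union>i\<in>{i\<in>G \<union> A. P i}. D i) = X \<union> (\<Union>v\<in>A. Y v)"
    by (auto simp: X_def Y_def split: if_splits)
  have e2: "(\<Union>i\<in>{i\<in>insert v G. P i}. D i) = X \<union> Y v" for v
    by (auto simp: X_def Y_def split: if_splits)
  have "card ((\<Union>v\<in>A. Y v) - X) = card (\<Union>v\<in>A. Y v - X)" by (rule arg_cong[where f=card]) auto
  also have "\<dots> \<le> (\<Sum>v\<in>A. card (Y v - X))" by (rule card_UN_le[OF assms(3)])
  finally have le: "card ((\<Union>v\<in>A. Y v) - X) \<le> (\<Sum>v\<in>A. card (Y v - X))" .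
  have "real (card (X \<union> (\<Union>v\<in>A. Y v))) = real (card X) + real (card ((\<Union>v\<in>A. Y v) - X))"
    using cu[of "\<Union>v\<in>A. Y v"] YV by (simp add: UN_least)
  also have "\<dots> \<le> real (card X) + (\<Sum>v\<in>A. real (card (Y v - X)))"
    using le by (metis add_le_cancel_left of_nat_le_iff of_nat_sum)
  also have "(\<Sum>v\<in>A. real (card (Y v - X))) = (\<Sum>v\<in>A. real (card (X \<union> Y v)) - real (card X))"
    using cu[OF YV] by simp
  finally show ?thesis unfolding e1 e2 X_def .
qed

locale rw =
  fixes V :: "'a set" and s :: 'a and par :: "'a \<Rightarrow> 'a" and lam :: real and T :: "real measure"
  assumes finV: "finite V" and lam: "lam > 0" and Tp: "prob_space T" and Ts: "sets T = sets borel"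
begin

definition M where "M = edge_space V s lam \<Otimes>\<^sub>M T"
definition F where "F S \<omega> = real (card (\<Union>i \<in> {i \<in> S. snd \<omega> < infection_time s par (fst \<omega>) i}.
                              descendants V s par i))"

lemma r_def: "reward V s par lam T S = integral\<^sup>L M (F S)"
  unfolding reward_def M_def F_def[abs_def] ..

lemma fm: "finite_measure M"
proof -
  have "prob_space (edge_space V s lam)" unfolding edge_space_def
    by (rule prob_space_PiM) (rule prob_space_exponential_density[OF lam])
  then have "prob_space M" unfolding M_def by (rule prob_space_pair[OF _ Tp])
  then show ?thesis by (simp add: prob_space.finite_measure)
qed

lemma D_sub: "descendants V s par i \<subseteq> V" by (auto simp: descendants_def)

lemma integ: assumes "S \<subseteq> V" shows "integrable M (F S)"
proof (rule finite_measure.integrable_const_bound[OF fm, where B="real (card V)"])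
  show "AE x in M. norm (F S x) \<le> real (card V)"
    by (auto simp: F_def descendants_def intro!: AE_I2 card_mono finV)
  show "F S \<in> borel_measurable M" unfolding F_def M_def
    by (rule integrand_meas[OF finV finite_subset[OF assms finV] Ts])
qed

lemma r_mono: assumes "S \<subseteq> S'" "S' \<subseteq> V"
  shows "reward V s par lam T S \<le> reward V s par lam T S'"
  unfolding r_def
  by (rule integral_mono[OF integ integ]) (use assms in \<open>auto simp: F_def descendants_def intro!: cov_mono finV\<close>)

lemma r_nonneg: "0 \<le> reward V s par lam T S"
  unfolding r_def by (rule integral_nonneg_AE) (simp add: F_def)

lemma r_submod: assumes "G \<subseteq> V" "A \<subseteq> V"
  shows "reward V s par lam T (G \<union> A) \<le> reward V s par lam T G
     + (\<Sum>v\<in>A. reward V s par lam T (insert v G) - reward V s par lam T G)"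
proof -
  have fA: "finite A" using assms finV finite_subset by blast
  have iv: "integrable M (\<lambda>\<omega>. F (insert v G) \<omega> - F G \<omega>)" if "v \<in> A" for v
    using that assms by (intro Bochner_Integration.integrable_diff integ) auto
  have dI: "(LINT \<omega>|M. F (insert v G) \<omega> - F G \<omega>) = integral\<^sup>L M (F (insert v G)) - integral\<^sup>L M (F G)"
    if "v \<in> A" for v using that assms by (intro Bochner_Integration.integral_diff integ) auto
  have pw: "F (G \<union> A) \<omega> \<le> F G \<omega> + (\<Sum>v\<in>A. F (insert v G) \<omega> - F G \<omega>)" for \<omega>
    unfolding F_def by (rule cov_submod[OF finV _ fA]) (rule D_sub)
  have "integral\<^sup>L M (F (G \<union> A)) \<le> integral\<^sup>L M (\<lambda>\<omega>. F G \<omega> + (\<Sum>v\<in>A. F (insert v G) \<omega> - F G \<omega>))"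
    using assms iv
    by (intro integral_mono integ Bochner_Integration.integrable_add Bochner_Integration.integrable_sum)
       (auto intro!: pw)
  also have "\<dots> = integral\<^sup>L M (F G) + (\<Sum>v\<in>A. integral\<^sup>L M (F (insert v G)) - integral\<^sup>L M (F G))"
    using assms iv dI
    by (subst Bochner_Integration.integral_add)
       (auto intro!: integ Bochner_Integration.integrable_sum simp: Bochner_Integration.integral_sum
         Bochner_Integration.integral_diff)
  finally show ?thesis unfolding r_def .
qed

end

theorem mainTheorem5:
  fixes V :: "'a set" and s :: 'a and par :: "'a \<Rightarrow> 'a" and lam :: real
    and T :: "real measure" and k :: nat and u :: "nat \<Rightarrow> 'a"
  assumes tree: "rooted_tree V s par"
    and lam: "lam > 0"
    and T_prob: "prob_space T" and T_sets: "sets T = sets borel"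
    and tau_nonneg: "AE t in T. 0 \<le> t"
    and k: "1 \<le> k" "k \<le> card V"
    and greedy: "\<forall>t\<in>{1..k}. u t \<in> V - u ` {1..<t} \<and>
        (\<forall>v \<in> V - u ` {1..<t}.
           reward V s par lam T (insert v (u ` {1..<t})) - reward V s par lam T (u ` {1..<t})
           \<le> reward V s par lam T (insert (u t) (u ` {1..<t})) - reward V s par lam T (u ` {1..<t}))"
  shows "reward V s par lam T (u ` {1..k})
         \<ge> (1 - 1 / exp 1) * Max {reward V s par lam T S | S. S \<subseteq> V \<and> card S = k}"
proof -
  have finV': "finite V" using tree unfolding rooted_tree_def by blast
  interpret rw V s par lam T
    by (rule rw.intro[OF finV' lam T_prob T_sets])
  let ?r = "reward V s par lam T"
  define G where "G m = u ` {1..m}" for m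
  have uV: "u t \<in> V" if "t \<in> {1..k}" for t using greedy that by blast
  have GV: "G m \<subseteq> V" if "m \<le> k" for m using uV that by (auto simp: G_def)
  have Gs: "G (Suc m) = insert (u (Suc m)) (G m)" for m
    by (auto simp: G_def atLeastAtMostSuc_conv)
  have gr: "u (Suc m) \<in> V - G m \<and> (\<forall>v\<in>V - G m. ?r (insert v (G m)) - ?r (G m)
              \<le> ?r (G (Suc m)) - ?r (G m))" if "m < k" for m
  proof -
    have "Suc m \<in> {1..k}" using that by simp
    note H = greedy[rule_format, OF this]
    have e: "u ` {1..<Suc m} = G m" by (simp add: G_def atLeastLessThanSuc_atLeastAtMost)
    show ?thesis using H unfolding e Gs by simp
  qed
  define Sset where "Sset = {S. S \<subseteq> V \<and> card S = k}"
  have fin: "finite (?r ` Sset)"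
    by (rule finite_imageI, rule finite_subset[of _ "Pow V"]) (auto simp: Sset_def finV)
  obtain S0 where "S0 \<subseteq> V" "card S0 = k" using k obtain_subset_with_card_n by metis
  then have ne: "?r ` Sset \<noteq> {}" by (auto simp: Sset_def)
  have "Max (?r ` Sset) \<in> ?r ` Sset" using Max_in[OF fin ne] .
  then obtain Sx where Sx: "Sx \<subseteq> V" "card Sx = k" and opt: "Max (?r ` Sset) = ?r Sx"
    by (auto simp: Sset_def)
  have seteq: "{reward V s par lam T S | S. S \<subseteq> V \<and> card S = k} = ?r ` Sset"
    by (auto simp: Sset_def)
  define Opt where "Opt = ?r Sx"
  have O0: "0 \<le> Opt" by (simp add: Opt_def r_nonneg)
  have kpos: "real k > 0" using k by simp
  have step: "Opt - ?r (G m) \<le> real k * (?r (G (Suc m)) - ?r (G m))" if "m < k" for m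
  proof -
    have mV: "G m \<subseteq> V" using GV that by simp
    have dnn: "0 \<le> ?r (G (Suc m)) - ?r (G m)"
      using r_mono[of "G m" "G (Suc m)"] GV[of "Suc m"] that Gs by auto
    have "Opt \<le> ?r (G m \<union> (Sx - G m))" unfolding Opt_def
      by (rule r_mono) (use Sx mV in auto)
    also have "\<dots> \<le> ?r (G m) + (\<Sum>v\<in>Sx - G m. ?r (insert v (G m)) - ?r (G m))"
      by (rule r_submod) (use Sx mV in auto)
    also have "(\<Sum>v\<in>Sx - G m. ?r (insert v (G m)) - ?r (G m))
        \<le> (\<Sum>v\<in>Sx - G m. ?r (G (Suc m)) - ?r (G m))"
      by (rule sum_mono) (use gr[OF that] Sx in auto)
    also have "\<dots> = real (card (Sx - G m)) * (?r (G (Suc m)) - ?r (G m))" by simp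
    also have "\<dots> \<le> real k * (?r (G (Suc m)) - ?r (G m))"
    proof (rule mult_right_mono[OF _ dnn])
      have "card (Sx - G m) \<le> card Sx" using Sx finV by (intro card_mono) (auto intro: finite_subset)
      then show "real (card (Sx - G m)) \<le> real k" using Sx by simp
    qed
    finally show ?thesis by simp
  qed
  have ind: "Opt - ?r (G m) \<le> (1 - 1 / real k) ^ m * Opt" if "m \<le> k" for m
    using that
  proof (induction m)
    case 0
    have "G 0 = {}" by (simp add: G_def)
    then show ?case using r_nonneg[of "{}"] by simp
  next
    case (Suc m)
    have st: "Opt - ?r (G m) \<le> real k * (?r (G (Suc m)) - ?r (G m))" using step Suc by simp
    have IH: "Opt - ?r (G m) \<le> (1 - 1 / real k) ^ m * Opt" using Suc by simp
    have c: "0 \<le> 1 - 1 / real k" using k by (simp add: field_simps)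
    have "Opt - ?r (G (Suc m)) \<le> (1 - 1 / real k) * (Opt - ?r (G m))"
    proof -
      have "real k * (Opt - ?r (G (Suc m))) \<le> (real k - 1) * (Opt - ?r (G m))"
        using st by (simp add: algebra_simps)
      then have "Opt - ?r (G (Suc m)) \<le> (real k - 1) * (Opt - ?r (G m)) / real k"
        using kpos by (simp add: field_simps)
      also have "\<dots> = (1 - 1 / real k) * (Opt - ?r (G m))" using kpos by (simp add: field_simps)
      finally show ?thesis .
    qed
    also have "\<dots> \<le> (1 - 1 / real k) * ((1 - 1 / real k) ^ m * Opt)"
      by (rule mult_left_mono[OF IH c])
    finally show ?case by simp
  qed
  have e: "(1 - 1 / real k) ^ k \<le> 1 / exp 1"
  proof -
    have c: "0 \<le> 1 - 1 / real k" using k by (simp add: field_simps)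
    have "1 - 1 / real k \<le> exp (- (1 / real k))" using exp_ge_add_one_self[of "- (1 / real k)"] by simp
    then have "(1 - 1 / real k) ^ k \<le> exp (- (1 / real k)) ^ k" by (rule power_mono[OF _ c])
    also have "\<dots> = exp (real k * (- (1 / real k)))" by (rule exp_of_nat_mult[symmetric])
    also have "\<dots> = 1 / exp 1" using kpos by (simp add: exp_minus field_simps)
    finally show ?thesis .
  qed
  have "Opt - ?r (G k) \<le> (1 / exp 1) * Opt"
    using ind[of k] mult_right_mono[OF e O0] by simp
  then have "?r (G k) \<ge> (1 - 1 / exp 1) * Opt" by (simp add: algebra_simps)
  then show ?thesis unfolding seteq opt Opt_def[symmetric] G_def .
qed

end
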